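(* Let $A\subset\mathcal H$ be an affine subspace such that $A\cap\operatorname{conv}(\frac12(d+\mathcal W))$ is a face of $\operatorname{conv}(\frac12(d+\mathcal W))$, and suppose there exists $\bar c\in\mathcal C\cap A$ with $\bar c\notin\operatorname{conv}(\frac12(d+\mathcal W))$. Let $\bar x\in A$. If $\bar x=\frac12(\bar a+\bar a')$ with $\bar a,\bar a'\in\mathcal C$, then $\bar a,\bar a'\in A$.
   Context: Setting: $G$ compact Lie group, $K\subset G$ closed, $G/K$ connected almost effective, isotropy representation $\mathfrak p=\mathfrak p_1\oplus\cdots\oplus\mathfrak p_r$ ($r\ge2$) with pairwise inequivalent $\mathbb R$-irreducible summands, $d_i=\dim\mathfrak p_i$, $d=(d_1,\dots,d_r)$, $n=\sum d_i$. The scalar curvature of the metric $e^{q_i}Q$ on $\mathfrak p_i$ is $S(q)=\sum_{w\in\mathcal W}A_we^{w\cdot q}$, $\mathcal W\subset\mathbb Z^r$ finite, $A_w\ne0$, each $w$ of type I (one entry $-1$), type II (one entry $1$, two entries $-1$) or type III (one entry $1$, one entry $-2$), other entries $0$; $A_w>0$ for type I and $<0$ otherwise. Assume $\dim\operatorname{conv}(\mathcal W)=r-1$. $J$ is the symmetric bilinear form with $J(p,p)=\frac1{n-1}(\sum p_i)^2-\sum p_i^2/d_i$. $u=\sum_{\bar c\in\mathcal C}F_{\bar c}e^{\bar c\cdot q}$ ($\mathcal C$ finite, $F_{\bar c}\ne0$) is a superpotential: for every $\xi$, $\sum_{(\bar a,\bar c)\in\mathcal C^2,\ \bar a+\bar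 c=\xi}J(\bar a,\bar c)F_{\bar a}F_{\bar c}$ equals $A_w$ if $\xi=d+w$, $w\in\mathcal W$, and $0$ otherwise; $\mathcal C$ is normalised to lie in the hyperplane $\mathcal H=\{\sum\bar x_i=\frac12(n-1)\}$, which contains $\frac12(d+\mathcal W)$. *)

theory Defs
  imports "HOL-Analysis.Analysis"
begin

text \<open>Vectors in R^r are modelled as real^'r for a finite index type 'r (r = CARD('r)).
  The dimensions d_i of the isotropy summands are given by dims :: 'r => nat.\<close>

definition dvec :: "('r::finite \<Rightarrow> nat) \<Rightarrow> real^'r" where
  "dvec dims = (\<chi> i. real (dims i))"

definition ntot :: "('r::finite \<Rightarrow> nat) \<Rightarrow> real" where
  "ntot dims = (\<Sum>i\<in>UNIV. real (dims i))"

definition typeI :: "real^'r::finite \<Rightarrow> bool" where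
  "typeI w \<longleftrightarrow> (\<exists>i. w $ i = -1 \<and> (\<forall>k. k \<noteq> i \<longrightarrow> w $ k = 0))"

definition typeII :: "real^'r::finite \<Rightarrow> bool" where
  "typeII w \<longleftrightarrow> (\<exists>i j l. i \<noteq> j \<and> i \<noteq> l \<and> j \<noteq> l \<and>
      w $ i = 1 \<and> w $ j = -1 \<and> w $ l = -1 \<and>
      (\<forall>k. k \<noteq> i \<and> k \<noteq> j \<and> k \<noteq> l \<longrightarrow> w $ k = 0))"

definition typeIII :: "real^'r::finite \<Rightarrow> bool" where
  "typeIII w \<longleftrightarrow> (\<exists>i j. i \<noteq> j \<and> w $ i = 1 \<and> w $ j = -2 \<and>
      (\<forall>k. k \<noteq> i \<and> k \<noteq> j \<longrightarrow> w $ k = 0))"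

text \<open>The symmetric bilinear form J (polarisation of the given quadratic form).\<close>
definition Jform :: "('r::finite \<Rightarrow> nat) \<Rightarrow> real^'r \<Rightarrow> real^'r \<Rightarrow> real" where
  "Jform dims p q =
     (\<Sum>i\<in>UNIV. p $ i) * (\<Sum>i\<in>UNIV. q $ i) / (ntot dims - 1)
     - (\<Sum>i\<in>UNIV. p $ i * q $ i / real (dims i))"

definition Hplane :: "('r::finite \<Rightarrow> nat) \<Rightarrow> (real^'r) set" where
  "Hplane dims = {x. (\<Sum>i\<in>UNIV. x $ i) = (ntot dims - 1) / 2}"

text \<open>Superpotential equations for u = sum_{c in C} F c * exp(c.q), with
  scalar curvature S = sum_{w in W} Aw w * exp(w.q).\<close>
definition is_superpotential ::
  "('r::finite \<Rightarrow> nat) \<Rightarrow> (real^'r) set \<Rightarrow> (real^'r \<Rightarrow> real)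
     \<Rightarrow> (real^'r) set \<Rightarrow> (real^'r \<Rightarrow> real) \<Rightarrow> bool" where
  "is_superpotential dims W Aw C F \<longleftrightarrow>
     (\<forall>\<xi>. (\<Sum>(a, c)\<in>{(a, c). a \<in> C \<and> c \<in> C \<and> a + c = \<xi>}. Jform dims a c * F a * F c)
          = (if \<xi> \<in> (\<lambda>w. dvec dims + w) ` W then Aw (\<xi> - dvec dims) else 0))"

end

theory Submission
  imports Defs
begin

lemma avoid_zero:
  fixes D :: "('a::real_inner) set"
  assumes "finite D" "0 \<notin> D"
  shows "\<exists>g. \<forall>v\<in>D. inner g v \<noteq> 0"
  using assms
proof (induction D rule: finite_induct)
  case empty then show ?case by auto
next
  case (insert v D)
  then obtain g where g: "\<forall>w\<in>D. inner g w \<noteq> 0" by auto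
  have v0: "v \<noteq> 0" using insert.prems by auto
  obtain e::real where e: "e \<notin> (\<lambda>w. - inner g w / inner v w) ` insert v D"
  proof -
    have "finite ((\<lambda>w. - inner g w / inner v w) ` insert v D)" using insert.hyps(1) by simp
    then show ?thesis using ex_new_if_finite[OF infinite_UNIV_char_0, of "(\<lambda>w. - inner g w / inner v w) ` insert v D"] that by blast
  qed
  have "\<forall>w\<in>insert v D. inner (g + e *\<^sub>R v) w \<noteq> 0"
  proof
    fix w assume w: "w \<in> insert v D"
    show "inner (g + e *\<^sub>R v) w \<noteq> 0"
    proof (cases "inner v w = 0")
      case True
      then have "w \<noteq> v" using v0 by auto
      then show ?thesis using True g w by (simp add: inner_add_left)
    next
      case False
      show ?thesis
      proof
        assume "inner (g + e *\<^sub>R v) w = 0"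
        then have "inner g w + e * inner v w = 0" by (simp add: inner_add_left)
        then have "e = - inner g w / inner v w" using False by (simp add: field_simps)
        then show False using e w by auto
      qed
    qed
  qed
  then show ?case by blast
qed

lemma lex_max:
  fixes \<phi> \<psi> :: "'a \<Rightarrow> real"
  assumes "finite X" "X \<noteq> {}"
  shows "\<exists>x\<in>X. \<forall>y\<in>X. \<phi> y < \<phi> x \<or> (\<phi> y = \<phi> x \<and> \<psi> y \<le> \<psi> x)"
  using assms
proof (induction X rule: finite_ne_induct)
  case (singleton x) then show ?case by auto
next
  case (insert y F)
  then obtain x where x: "x\<in>F" "\<forall>z\<in>F. \<phi> z < \<phi> x \<or> (\<phi> z = \<phi> x \<and> \<psi> z \<le> \<psi> x)" by auto
  show ?case
  proof (cases "\<phi> x < \<phi> y \<or> (\<phi> x = \<phi> y \<and> \<psi> x \<le> \<psi> y)")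
    case True
    have "\<forall>z\<in>insert y F. \<phi> z < \<phi> y \<or> (\<phi> z = \<phi> y \<and> \<psi> z \<le> \<psi> y)"
    proof
      fix z assume "z \<in> insert y F"
      then consider "z = y" | "z \<in> F" by blast
      then show "\<phi> z < \<phi> y \<or> (\<phi> z = \<phi> y \<and> \<psi> z \<le> \<psi> y)"
      proof cases
        case 1 then show ?thesis by simp
      next
        case 2
        have "\<phi> z < \<phi> x \<or> (\<phi> z = \<phi> x \<and> \<psi> z \<le> \<psi> x)" using x(2) 2 by blast
        then show ?thesis using True by auto
      qed
    qed
    then show ?thesis by blast
  next
    case False
    have "\<forall>z\<in>insert y F. \<phi> z < \<phi> x \<or> (\<phi> z = \<phi> x \<and> \<psi> z \<le> \<psi> x)"
      using False x by auto
    then show ?thesis using x by blast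
  qed
qed

definition Qf :: "('r::finite \<Rightarrow> nat) \<Rightarrow> real^'r \<Rightarrow> real^'r \<Rightarrow> real" where
  "Qf dims p q = (\<Sum>i\<in>UNIV. p $ i * q $ i / real (dims i))"

lemma Jform_sym: "Jform dims p q = Jform dims q p"
  unfolding Jform_def by (simp add: mult.commute)

lemma Jform_H:
  assumes "p \<in> Hplane dims" "q \<in> Hplane dims"
  shows "Jform dims p q = ((ntot dims - 1)/2) * ((ntot dims - 1)/2) / (ntot dims - 1) - Qf dims p q"
proof -
  have p: "(\<Sum>i\<in>UNIV. p $ i) = (ntot dims - 1)/2" using assms(1) by (simp add: Hplane_def)
  have q: "(\<Sum>i\<in>UNIV. q $ i) = (ntot dims - 1)/2" using assms(2) by (simp add: Hplane_def)
  show ?thesis by (simp only: Jform_def Qf_def p q)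
qed

lemma Qf_add: "Qf dims p (q + q') = Qf dims p q + Qf dims p q'"
  unfolding Qf_def by (simp add: ring_distribs add_divide_distrib sum.distrib)

lemma Qf_sym: "Qf dims p q = Qf dims q p"
  unfolding Qf_def by (simp add: mult.commute)

lemma Qf_diff_sq: "Qf dims (x - y) (x - y) = Qf dims x x - 2 * Qf dims y x + Qf dims y y"
proof -
  have "Qf dims (x - y) (x - y) = (\<Sum>i\<in>UNIV. x$i*x$i/real (dims i) - 2*(y$i*x$i/real (dims i)) + y$i*y$i/real (dims i))"
    unfolding Qf_def by (intro sum.cong) (auto simp: algebra_simps diff_divide_distrib add_divide_distrib)
  also have "\<dots> = Qf dims x x - 2 * Qf dims y x + Qf dims y y"
    unfolding Qf_def by (simp add: sum.distrib sum_subtractf sum_distrib_left)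
  finally show ?thesis .
qed

lemma Qf_pos:
  assumes "\<forall>i. dims i \<ge> 1" "v \<noteq> 0"
  shows "Qf dims v v > 0"
proof -
  obtain i where i: "v $ i \<noteq> 0" using assms(2) by (metis vec_eq_iff zero_index)
  have d: "\<And>j. real (dims j) > 0" using assms(1) by (metis of_nat_0_less_iff less_le_trans zero_less_one)
  show ?thesis unfolding Qf_def
  proof (rule sum_pos2[of _ i])
    have "0 < v $ i * v $ i" using i by (cases "v$i > 0") (auto simp: mult_pos_pos mult_neg_neg)
    then show "0 < v $ i * v $ i / real (dims i)" using d[of i] by (simp add: divide_pos_pos)
    show "\<And>j. j \<in> UNIV \<Longrightarrow> 0 \<le> v $ j * v $ j / real (dims j)" using d by (simp add: divide_nonneg_pos)
  qed auto
qed

lemma KL: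
  fixes dims :: "'r::finite \<Rightarrow> nat" and W :: "(real^'r) set" and Aw :: "real^'r \<Rightarrow> real"
    and C :: "(real^'r) set" and F :: "real^'r \<Rightarrow> real" and g :: "real^'r" and \<beta> :: real
    and c c' :: "real^'r"
  assumes dims_pos: "\<forall>i. dims i \<ge> 1"
    and C_fin: "finite C" and F_nz: "\<forall>c\<in>C. F c \<noteq> 0"
    and superpot: "is_superpotential dims W Aw C F"
    and C_H: "C \<subseteq> Hplane dims"
    and sepP: "\<forall>w\<in>W. inner g ((1/2) *\<^sub>R (dvec dims + w)) < \<beta>"
    and cC: "c \<in> C" "c' \<in> C" "c \<noteq> c'"
    and gc: "inner g c > \<beta>" "inner g c' > \<beta>"
  shows False
proof -
  define E where "E = C \<union> (\<lambda>(a,b). a + b) ` (C \<times> C)"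
  have finE: "finite E" unfolding E_def using C_fin by auto
  define D where "D = (\<lambda>(u,v). u - v) ` {(u,v). u \<in> E \<and> v \<in> E \<and> u \<noteq> v}"
  have finD: "finite D" unfolding D_def
    by (rule finite_imageI, rule finite_subset[of _ "E \<times> E"]) (use finE in auto)
  have D0: "0 \<notin> D" unfolding D_def by auto
  obtain h :: "real^'r" where h: "\<forall>v\<in>D. inner h v \<noteq> 0" using avoid_zero[OF finD D0] by blast
  have inj: "u = v" if "u \<in> E" "v \<in> E" "inner h u = inner h v" for u v
  proof (rule ccontr)
    assume "u \<noteq> v"
    then have "u - v \<in> D" unfolding D_def using that by auto
    then show False using h that(3) by (auto simp: inner_diff_right)
  qed
  have CE: "x \<in> E" if "x \<in> C" for x using that unfolding E_def by auto
  have sE: "a + b \<in> E" if "a \<in> C" "b \<in> C" for a b using that unfolding E_def by auto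
  define le where "le = (\<lambda>v w. inner g v < inner g w \<or> (inner g v = inner g w \<and> inner h v \<le> inner h w))"
  define lt where "lt = (\<lambda>v w. inner g v < inner g w \<or> (inner g v = inner g w \<and> inner h v < inner h w))"
  have le_add: "le (a+a') (b+b')" if "le a b" "le a' b'" for a a' b b'
    using that unfolding le_def by (auto simp: inner_add_right)
  have lt_add1: "lt (a+a') (b+b')" if "lt a b" "le a' b'" for a a' b b'
    using that unfolding le_def lt_def by (auto simp: inner_add_right)
  have lt_add2: "lt (a+a') (b+b')" if "le a b" "lt a' b'" for a a' b b'
    using that unfolding le_def lt_def by (auto simp: inner_add_right)
  have lt_add3: "lt (a+a') (b+b')" if "lt a b" "lt a' b'" for a a' b b'
    using that unfolding le_def lt_def by (auto simp: inner_add_right)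
  have lt_irr: "\<not> lt a a" for a unfolding lt_def by auto
  have lt_le_trans: "lt a c" if "lt a b" "le b c" for a b c
    using that unfolding le_def lt_def by auto
  have le_lt_trans: "lt a c" if "le a b" "lt b c" for a b c
    using that unfolding le_def lt_def by auto
  have lt_le: "le a b" if "lt a b" for a b using that unfolding le_def lt_def by auto
  have le_g: "inner g a \<le> inner g b" if "le a b" for a b using that unfolding le_def by auto
  have lt_half: "lt a b" if "lt (a+a) (b+b)" for a b
    using that unfolding lt_def inner_add_right by auto
  have le_eq: "inner g a = inner g z \<and> inner h a = inner h z" if "le a z" "le b z" "a + b = z + z" for a b z
  proof -
    have "inner g a + inner g b = inner g z + inner g z" "inner h a + inner h b = inner h z + inner h z"
      by (metis that(3) inner_add_right)+
    then show ?thesis using that(1,2) unfolding le_def by auto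
  qed
  have tot: "lt u v \<or> lt v u" if "u \<in> E" "v \<in> E" "u \<noteq> v" for u v
  proof -
    have "inner h u \<noteq> inner h v" using inj that by blast
    then show ?thesis unfolding lt_def by auto
  qed
  obtain c1 where c1: "c1 \<in> C" "\<forall>y\<in>C. le y c1"
    using lex_max[OF C_fin, of "inner g" "inner h"] cC(1) unfolding le_def by blast
  have lt_c1: "lt y c1" if "y \<in> C" "y \<noteq> c1" for y
  proof -
    have "inner h y \<noteq> inner h c1" using inj[OF CE[OF that(1)] CE[OF c1(1)]] that(2) by blast
    then show ?thesis using c1(2) that(1) unfolding le_def lt_def by auto
  qed
  have g1: "inner g c1 > \<beta>" using le_g[OF c1(2)[rule_format, OF cC(1)]] gc(1) by linarith
  have notW: "\<xi> \<notin> (\<lambda>w. dvec dims + w) ` W" if "inner g \<xi> > 2 * \<beta>" for \<xi>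
  proof
    assume "\<xi> \<in> (\<lambda>w. dvec dims + w) ` W"
    then obtain w where w: "w \<in> W" "\<xi> = dvec dims + w" by auto
    have "inner g ((1/2) *\<^sub>R (dvec dims + w)) < \<beta>" using sepP w(1) by auto
    then have "inner g \<xi> < 2 * \<beta>" using w(2) by (simp add: inner_scaleR_right)
    then show False using that by linarith
  qed
  have eq0: "(\<Sum>(a, c)\<in>{(a, c). a \<in> C \<and> c \<in> C \<and> a + c = \<xi>}. Jform dims a c * F a * F c) = 0"
    if "inner g \<xi> > 2 * \<beta>" for \<xi>
    using superpot[unfolded is_superpotential_def, rule_format, of \<xi>] notW[OF that] by simp
  have finS: "finite {(a, c). a \<in> C \<and> c \<in> C \<and> a + c = \<xi>}" for \<xi>
    by (rule finite_subset[of _ "C \<times> C"]) (use C_fin in auto)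
  have J11: "Jform dims c1 c1 = 0"
  proof -
    have S: "{(a, c). a \<in> C \<and> c \<in> C \<and> a + c = c1 + c1} = {(c1,c1)}"
    proof (rule set_eqI, rule iffI)
      fix p assume "p \<in> {(a, c). a \<in> C \<and> c \<in> C \<and> a + c = c1 + c1}"
      then obtain a b where ab: "p = (a,b)" "a \<in> C" "b \<in> C" "a + b = c1 + c1" by auto
      have "a = c1"
      proof (rule ccontr)
        assume "a \<noteq> c1"
        then have "lt (a+b) (c1+c1)" using lt_add1[OF lt_c1[OF ab(2)] c1(2)[rule_format, OF ab(3)]] by simp
        then show False using ab(4) lt_irr by simp
      qed
      then show "p \<in> {(c1,c1)}" using ab by auto
    qed (use c1 in auto)
    have "inner g (c1 + c1) > 2 * \<beta>" using g1 unfolding inner_add_right by simp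
    from eq0[OF this] have "Jform dims c1 c1 * F c1 * F c1 = 0" unfolding S by simp
    then show ?thesis using F_nz c1(1) by simp
  qed
  define e where "e = (if c = c1 then c' else c)"
  have e: "e \<in> C" "e \<noteq> c1" "inner g e > \<beta>" using cC gc unfolding e_def by auto
  define N where "N = {b \<in> C. b \<noteq> c1 \<and> Jform dims c1 b \<noteq> 0}"
  define T where "T = {b \<in> C. b \<noteq> c1 \<and> Jform dims c1 b = 0}"
  have NT: "y \<in> N \<or> y \<in> T" if "y \<in> C" "y \<noteq> c1" for y using that unfolding N_def T_def by auto
  have finN: "finite N" "finite T" unfolding N_def T_def using C_fin by auto
  have cHT: "c1 \<in> Hplane dims" "\<And>y. y \<in> C \<Longrightarrow> y \<in> Hplane dims" using C_H c1(1) by auto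
  define \<kappa> where "\<kappa> = ((ntot dims - 1)/2) * ((ntot dims - 1)/2) / (ntot dims - 1)"
  have JQ: "Jform dims c1 y = \<kappa> - Qf dims c1 y" if "y \<in> C" for y
    unfolding \<kappa>_def by (rule Jform_H[OF cHT(1) cHT(2)[OF that]])
  have Q11: "Qf dims c1 c1 = \<kappa>" using JQ[OF c1(1)] J11 by simp
  have caseA: False if cN: "cN \<in> N" "\<forall>y\<in>N. le y cN" and TN: "\<forall>y\<in>T. lt (y+y) (c1+cN)" for cN
  proof -
    have cN1: "cN \<in> C" "cN \<noteq> c1" "Jform dims c1 cN \<noteq> 0" using cN(1) unfolding N_def by auto
    have thr: "inner g (c1 + cN) > 2 * \<beta>"
    proof (cases "e \<in> N")
      case True
      then show ?thesis using le_g[OF cN(2)[rule_format, OF True]] e(3) g1 unfolding inner_add_right by simp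
    next
      case False
      then have "e \<in> T" using NT e by auto
      then show ?thesis using le_g[OF lt_le[OF TN[rule_format, OF \<open>e \<in> T\<close>]]] e(3) unfolding inner_add_right by simp
    qed
    have S: "{(a, c). a \<in> C \<and> c \<in> C \<and> a + c = c1 + cN} = {(c1,cN),(cN,c1)}"
    proof (rule set_eqI, rule iffI)
      fix p assume "p \<in> {(a, c). a \<in> C \<and> c \<in> C \<and> a + c = c1 + cN}"
      then obtain a b where ab: "p = (a,b)" "a \<in> C" "b \<in> C" "a + b = c1 + cN" by auto
      have "(a = c1 \<and> b = cN) \<or> (a = cN \<and> b = c1)"
      proof (rule ccontr)
        assume nn: "\<not> ((a = c1 \<and> b = cN) \<or> (a = cN \<and> b = c1))"
        have a1: "a \<noteq> c1"
        proof
          assume "a = c1" then have "b = cN" using ab(4) by simp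
          then show False using nn \<open>a = c1\<close> by simp
        qed
        have b1: "b \<noteq> c1"
        proof
          assume "b = c1" then have "a = cN" using ab(4) by (simp add: add.commute)
          then show False using nn \<open>b = c1\<close> by simp
        qed
        have "lt (a+b) (c1+cN)"
        proof (cases "a \<in> N")
          case True
          have "lt (a+b) (cN+c1)" using lt_add2[OF cN(2)[rule_format, OF True] lt_c1[OF ab(3) b1]] .
          then show ?thesis by (simp add: add.commute)
        next
          case aT: False
          show ?thesis
          proof (cases "b \<in> N")
            case True
            show ?thesis using lt_add1[OF lt_c1[OF ab(2) a1] cN(2)[rule_format, OF True]] .
          next
            case False
            have aT': "a \<in> T" "b \<in> T" using NT ab a1 b1 aT False by auto
            have "lt ((a+a)+(b+b)) ((c1+cN)+(c1+cN))"
              using lt_add3[OF TN[rule_format, OF aT'(1)] TN[rule_format, OF aT'(2)]] .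
            then have "lt ((a+b)+(a+b)) ((c1+cN)+(c1+cN))" by (simp add: algebra_simps)
            then show ?thesis by (rule lt_half)
          qed
        qed
        then show False using ab(4) lt_irr by simp
      qed
      then show "p \<in> {(c1,cN),(cN,c1)}" using ab(1) by auto
    qed (use c1 cN1 in auto)
    have "(\<Sum>(a, c)\<in>{(c1,cN),(cN,c1)}. Jform dims a c * F a * F c) = 0"
      using eq0[OF thr] unfolding S .
    then have "Jform dims c1 cN * F c1 * F cN + Jform dims cN c1 * F cN * F c1 = 0"
      using cN1(2) by simp
    then have "2 * (Jform dims c1 cN * F c1 * F cN) = 0" using Jform_sym[of dims cN c1] by (simp add: algebra_simps)
    then show False using cN1 F_nz c1(1) by simp
  qed
  have caseB: False if cT: "cT \<in> T" "\<forall>y\<in>T. le y cT" and NT': "\<forall>y\<in>N. lt (c1+y) (cT+cT)" for cT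
  proof -
    have cT1: "cT \<in> C" "cT \<noteq> c1" "Jform dims c1 cT = 0" using cT(1) unfolding T_def by auto
    have thr: "inner g (cT + cT) > 2 * \<beta>"
    proof (cases "e \<in> N")
      case True
      then show ?thesis using le_g[OF lt_le[OF NT'[rule_format, OF True]]] e(3) g1 unfolding inner_add_right by simp
    next
      case False
      then have "e \<in> T" using NT e by auto
      then show ?thesis using le_g[OF cT(2)[rule_format, OF \<open>e \<in> T\<close>]] e(3) unfolding inner_add_right by simp
    qed
    define S where "S = {(a, c). a \<in> C \<and> c \<in> C \<and> a + c = cT + cT}"
    have zero: "Jform dims a b = 0" if ab: "(a,b) \<in> S" "(a,b) \<noteq> (cT,cT)" for a b
    proof -
      have ab': "a \<in> C" "b \<in> C" "a + b = cT + cT" using ab(1) unfolding S_def by auto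
      have c1c1: False if "a = c1" "b = c1"
      proof -
        have "lt (cT+cT) (c1+c1)" using lt_add3[OF lt_c1[OF cT1(1,2)] lt_c1[OF cT1(1,2)]] .
        then show False using ab'(3) that lt_irr by simp
      qed
      show ?thesis
      proof (cases "a = c1")
        case True
        then have b1: "b \<noteq> c1" using c1c1 by auto
        have "b \<notin> N"
        proof
          assume "b \<in> N"
          then have "lt (c1+b) (cT+cT)" using NT' by auto
          then show False using ab'(3) True lt_irr by simp
        qed
        then have "b \<in> T" using NT ab'(2) b1 by auto
        then show ?thesis using True unfolding T_def by auto
      next
        case a1: False
        show ?thesis
        proof (cases "b = c1")
          case True
          have "a \<notin> N"
          proof
            assume "a \<in> N"
            then have "lt (c1+a) (cT+cT)" using NT' by auto
            then show False using ab'(3) True lt_irr by (simp add: add.commute)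
          qed
          then have "a \<in> T" using NT ab'(1) a1 by auto
          then show ?thesis using True Jform_sym[of dims a c1] unfolding T_def by auto
        next
          case b1: False
          have "lt (a+b) (cT+cT)"
          proof (cases "a \<in> N")
            case True
            have "lt (a+b) (a+c1)" using lt_add2[of a a b c1] lt_c1[OF ab'(2) b1] unfolding le_def by auto
            then show ?thesis using NT'[rule_format, OF True] unfolding lt_def by (auto simp: add.commute)
          next
            case aN: False
            show ?thesis
            proof (cases "b \<in> N")
              case True
              have "lt (a+b) (c1+b)" using lt_add1[of a c1 b b] lt_c1[OF ab'(1) a1] unfolding le_def by auto
              then show ?thesis using NT'[rule_format, OF True] unfolding lt_def by auto
            next
              case False
              have abT: "a \<in> T" "b \<in> T" using NT ab' a1 b1 aN False by auto
              have ea: "inner g a = inner g cT \<and> inner h a = inner h cT"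
                using le_eq[OF cT(2)[rule_format, OF abT(1)] cT(2)[rule_format, OF abT(2)] ab'(3)] .
              have eb: "inner g b = inner g cT \<and> inner h b = inner h cT"
                using le_eq[OF cT(2)[rule_format, OF abT(2)] cT(2)[rule_format, OF abT(1)]] ab'(3)
                by (simp add: add.commute)
              have "a = cT" using inj[OF CE[OF ab'(1)] CE[OF cT1(1)]] ea by blast
              moreover have "b = cT" using inj[OF CE[OF ab'(2)] CE[OF cT1(1)]] eb by blast
              ultimately show ?thesis using ab(2) by simp
            qed
          qed
          then show ?thesis using ab'(3) lt_irr by simp
        qed
      qed
    qed
    have inS: "(cT,cT) \<in> S" unfolding S_def using cT1 by auto
    have finS': "finite S" unfolding S_def by (rule finS)
    have "(\<Sum>(a, c)\<in>S. Jform dims a c * F a * F c)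
          = Jform dims cT cT * F cT * F cT + (\<Sum>(a, c)\<in>S - {(cT,cT)}. Jform dims a c * F a * F c)"
      by (subst sum.remove[OF finS' inS]) simp
    also have "(\<Sum>(a, c)\<in>S - {(cT,cT)}. Jform dims a c * F a * F c) = 0"
    proof (rule sum.neutral, rule ballI)
      fix p assume p: "p \<in> S - {(cT,cT)}"
      obtain a b where ab: "p = (a,b)" by (cases p)
      have "Jform dims a b = 0" using zero[of a b] p ab by auto
      then show "(case p of (a, c) \<Rightarrow> Jform dims a c * F a * F c) = 0" using ab by simp
    qed
    finally have "Jform dims cT cT * F cT * F cT = 0" using eq0[OF thr] unfolding S_def by simp
    moreover have "Jform dims cT cT < 0"
    proof -
      have QT: "Qf dims c1 cT = \<kappa>" using JQ[OF cT1(1)] cT1(3) by simp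
      have "Qf dims (cT - c1) (cT - c1) > 0" using Qf_pos[OF dims_pos] cT1(2) by simp
      then have "Qf dims cT cT > \<kappa>" using Qf_diff_sq[of dims cT c1] QT Q11 by simp
      moreover have "Jform dims cT cT = \<kappa> - Qf dims cT cT"
        unfolding \<kappa>_def by (rule Jform_H[OF cHT(2)[OF cT1(1)] cHT(2)[OF cT1(1)]])
      ultimately show ?thesis by simp
    qed
    ultimately show False using F_nz cT1(1) by simp
  qed
  have le_refl': "le a a" for a unfolding le_def by simp
  show False
  proof (cases "N = {}")
    case True
    have "e \<in> T" using NT[OF e(1) e(2)] True by simp
    then have Tne: "T \<noteq> {}" by auto
    obtain cT where cT0: "cT \<in> T" "\<forall>y\<in>T. inner g y < inner g cT \<or> (inner g y = inner g cT \<and> inner h y \<le> inner h cT)"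
      using lex_max[OF finN(2) Tne, of "inner g" "inner h"] by blast
    have cT: "cT \<in> T" "\<forall>y\<in>T. le y cT" using cT0 by (simp_all add: le_def)
    have "\<forall>y\<in>N. lt (c1+y) (cT+cT)" using True by simp
    then show False by (rule caseB[OF cT])
  next
    case Nne: False
    obtain cN where cN0: "cN \<in> N" "\<forall>y\<in>N. inner g y < inner g cN \<or> (inner g y = inner g cN \<and> inner h y \<le> inner h cN)"
      using lex_max[OF finN(1) Nne, of "inner g" "inner h"] by blast
    have cN: "cN \<in> N" "\<forall>y\<in>N. le y cN" using cN0 by (simp_all add: le_def)
    show False
    proof (cases "T = {}")
      case True
      have "\<forall>y\<in>T. lt (y+y) (c1+cN)" using True by simp
      then show False by (rule caseA[OF cN])
    next
      case Tne: False
      obtain cT where cT0: "cT \<in> T" "\<forall>y\<in>T. inner g y < inner g cT \<or> (inner g y = inner g cT \<and> inner h y \<le> inner h cT)"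
        using lex_max[OF finN(2) Tne, of "inner g" "inner h"] by blast
      have cT: "cT \<in> T" "\<forall>y\<in>T. le y cT" using cT0 by (simp_all add: le_def)
      have cN1: "cN \<in> C" "Jform dims c1 cN \<noteq> 0" using cN(1) unfolding N_def by auto
      have cT1: "cT \<in> C" "Jform dims c1 cT = 0" using cT(1) unfolding T_def by auto
      have ne: "c1 + cN \<noteq> cT + cT"
      proof
        assume eq: "c1 + cN = cT + cT"
        have "Qf dims c1 c1 + Qf dims c1 cN = Qf dims c1 cT + Qf dims c1 cT"
          using arg_cong[OF eq, of "Qf dims c1"] by (simp only: Qf_add)
        moreover have "Qf dims c1 cT = \<kappa>" using JQ[OF cT1(1)] cT1(2) by simp
        ultimately have "Qf dims c1 cN = \<kappa>" using Q11 by simp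
        then show False using JQ[OF cN1(1)] cN1(2) by simp
      qed
      have tt: "lt (c1 + cN) (cT + cT) \<or> lt (cT + cT) (c1 + cN)"
        by (rule tot[OF sE[OF c1(1) cN1(1)] sE[OF cT1(1) cT1(1)] ne])
      show False
      proof (cases "lt (c1 + cN) (cT + cT)")
        case lt1: True
        have "\<forall>y\<in>N. lt (c1+y) (cT+cT)"
        proof
          fix y assume y: "y \<in> N"
          have "le (c1+y) (c1+cN)" by (rule le_add[OF le_refl' cN(2)[rule_format, OF y]])
          then show "lt (c1+y) (cT+cT)" using lt1 by (rule le_lt_trans)
        qed
        then show False by (rule caseB[OF cT])
      next
        case False
        then have lt2: "lt (cT + cT) (c1 + cN)" using tt by simp
        have "\<forall>y\<in>T. lt (y+y) (c1+cN)"
        proof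
          fix y assume y: "y \<in> T"
          have "le (y+y) (cT+cT)" by (rule le_add[OF cT(2)[rule_format, OF y] cT(2)[rule_format, OF y]])
          then show "lt (y+y) (c1+cN)" using lt2 by (rule le_lt_trans)
        qed
        then show False by (rule caseA[OF cN])
      qed
    qed
  qed
qed


lemma rid1:
  fixes u v c b b' :: real
  assumes "u + v > 0"
  shows "(1 - u/(u+v)) * ((1-u)*c + u*b) + (u/(u+v)) * ((1-v)*c + v * b') = (1 - 2 * u * v / (u + v)) * c + (2 * u * v / (u + v)) * ((1/2) * (b + b'))"
proof -
  have d: "u + v \<noteq> 0" using assms by simp
  have "1 - u/(u+v) = v/(u+v)" using d by (simp add: field_simps)
  moreover have "1 - 2 * u * v / (u + v) = (u + v - 2 * u * v)/(u+v)" using d by (simp add: field_simps)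
  ultimately show ?thesis using d by (simp add: divide_simps) (simp add: algebra_simps)
qed

lemma rid2:
  fixes u c b :: real
  assumes "u > 0"
  shows "(1 - 1/u) * c + (1/u) * ((1 - u) * c + u * b) = b"
  using assms by (simp add: field_simps)

lemma rid3: fixes b c :: real shows "(1 - 2) * c + 2 * ((1/2) * (b + c)) = b" by (simp add: field_simps)

theorem lemma3p5:
  fixes dims :: "'r::finite \<Rightarrow> nat"
    and W :: "(real^'r) set" and Aw :: "real^'r \<Rightarrow> real"
    and C :: "(real^'r) set" and F :: "real^'r \<Rightarrow> real"
    and A :: "(real^'r) set" and x a a' :: "real^'r"
  assumes r2: "CARD('r) \<ge> 2"
    and dims_pos: "\<forall>i. dims i \<ge> 1"
    and W_fin: "finite W"
    and W_types: "\<forall>w\<in>W. typeI w \<or> typeII w \<or> typeIII w"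
    and Aw_nz: "\<forall>w\<in>W. Aw w \<noteq> 0"
    and Aw_pos: "\<forall>w\<in>W. typeI w \<longrightarrow> Aw w > 0"
    and Aw_neg: "\<forall>w\<in>W. \<not> typeI w \<longrightarrow> Aw w < 0"
    and W_dim: "aff_dim (convex hull W) = int CARD('r) - 1"
    and C_fin: "finite C"
    and F_nz: "\<forall>c\<in>C. F c \<noteq> 0"
    and superpot: "is_superpotential dims W Aw C F"
    and C_H: "C \<subseteq> Hplane dims"
    and A_aff: "affine A" and A_H: "A \<subseteq> Hplane dims"
    and A_face: "(A \<inter> convex hull ((\<lambda>w. (1/2) *\<^sub>R (dvec dims + w)) ` W))
                   face_of convex hull ((\<lambda>w. (1/2) *\<^sub>R (dvec dims + w)) ` W)"
    and c_ex: "\<exists>c\<in>C \<inter> A. c \<notin> convex hull ((\<lambda>w. (1/2) *\<^sub>R (dvec dims + w)) ` W)"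
    and x_A: "x \<in> A"
    and a_C: "a \<in> C" and a'_C: "a' \<in> C"
    and x_eq: "x = (1/2) *\<^sub>R (a + a')"
  shows "a \<in> A \<and> a' \<in> A"
proof -
  define P where "P = (\<lambda>w. (1/2) *\<^sub>R (dvec dims + w)) ` W"
  define K where "K = convex hull P"
  obtain c0 where c0: "c0 \<in> C" "c0 \<in> A" "c0 \<notin> K" using c_ex unfolding K_def P_def by auto
  have Wne: "W \<noteq> {}"
  proof
    assume "W = {}"
    then have "aff_dim (convex hull W) = -1" by simp
    then show False using W_dim r2 by simp
  qed
  have finP: "finite P" using W_fin unfolding P_def by simp
  have Kne: "K \<noteq> {}" using Wne unfolding K_def P_def by simp
  have KL': "closed_segment c c' \<inter> K \<noteq> {}" if cc: "c \<in> C" "c' \<in> C" "c \<noteq> c'" for c c'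
  proof
    assume disj: "closed_segment c c' \<inter> K = {}"
    obtain g \<beta> where gb: "\<forall>x\<in>K. inner g x < \<beta>" "\<forall>x\<in>closed_segment c c'. inner g x > \<beta>"
      using separating_hyperplane_compact_closed[of K "closed_segment c c'"]
        convex_convex_hull[of P] finite_imp_compact_convex_hull[OF finP] Kne
        compact_imp_closed[OF compact_segment[of c c']] disj
      unfolding K_def by (auto simp: Int_commute)
    have sepP: "\<forall>w\<in>W. inner g ((1/2) *\<^sub>R (dvec dims + w)) < \<beta>"
    proof
      fix w assume "w \<in> W"
      then have "(1/2) *\<^sub>R (dvec dims + w) \<in> K" unfolding K_def P_def by (intro hull_inc) auto
      then show "inner g ((1/2) *\<^sub>R (dvec dims + w)) < \<beta>" using gb(1) by blast
    qed
    show False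
      by (rule KL[OF dims_pos C_fin F_nz superpot C_H sepP cc]) (use gb(2) in auto)
  qed
  have main: "b \<in> A" if bb: "b \<in> C" "b' \<in> C" "(1/2) *\<^sub>R (b + b') \<in> A" for b b'
  proof -
    define xx where "xx = (1/2) *\<^sub>R (b + b')"
    have xxA: "xx \<in> A" using bb(3) unfolding xx_def .
    have aff: "(1 - t) *\<^sub>R y + t *\<^sub>R y' \<in> A" if "y \<in> A" "y' \<in> A" for t y y'
      using A_aff that unfolding affine_alt by blast
    show "b \<in> A"
    proof (cases "b = c0")
      case True then show ?thesis using c0 by simp
    next
      case bc0: False
      show ?thesis
      proof (cases "b' = c0")
        case True
        have "(1 - 2) *\<^sub>R c0 + 2 *\<^sub>R xx = b" unfolding xx_def True vec_eq_iff
          by (simp only: vector_add_component vector_scaleR_component real_scaleR_def rid3 simp_thms)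
        then show ?thesis using aff[OF c0(2) xxA, of 2] by simp
      next
        case b'c0: False
        obtain p where p: "p \<in> closed_segment c0 b" "p \<in> K" using KL'[OF c0(1) bb(1)] bc0 by auto
        obtain p' where p': "p' \<in> closed_segment c0 b'" "p' \<in> K" using KL'[OF c0(1) bb(2)] b'c0 by auto
        obtain u where u: "0 \<le> u" "u \<le> 1" "p = (1 - u) *\<^sub>R c0 + u *\<^sub>R b" using p(1) unfolding in_segment by blast
        obtain v where v: "0 \<le> v" "v \<le> 1" "p' = (1 - v) *\<^sub>R c0 + v *\<^sub>R b'" using p'(1) unfolding in_segment by blast
        have u0: "u > 0" using u c0(3) p(2) by (cases "u = 0") auto
        have v0: "v > 0" using v c0(3) p'(2) by (cases "v = 0") auto
        define z where "z = (1 - u/(u+v)) *\<^sub>R p + (u/(u+v)) *\<^sub>R p'"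
        define t where "t = 2 * u * v / (u + v)"
        have uv: "u + v > 0" using u0 v0 by simp
        have hz: "z = (1 - t) *\<^sub>R c0 + t *\<^sub>R xx"
          unfolding z_def t_def xx_def u(3) v(3) vec_eq_iff
          by (simp only: vector_add_component vector_scaleR_component real_scaleR_def rid1[OF uv] simp_thms)
        have zA: "z \<in> A" unfolding hz by (rule aff[OF c0(2) xxA])
        have mu: "0 < u/(u+v)" "u/(u+v) < 1" using u0 v0 uv by (auto simp: field_simps)
        have zK: "z \<in> K" unfolding z_def K_def
          using convexD[OF convex_convex_hull, of p P p' "1 - u/(u+v)" "u/(u+v)"] p(2) p'(2) mu
          unfolding K_def by simp
        have pA: "p \<in> A"
        proof (cases "p = p'")
          case True
          then have "z = p" unfolding z_def by (simp add: scaleR_left_distrib[symmetric])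
          then show ?thesis using zA by simp
        next
          case False
          have "z \<in> open_segment p p'" unfolding in_segment using False mu z_def by blast
          then have "p \<in> A \<inter> K" using face_ofD[OF A_face, of z p p'] p(2) p'(2) zA zK
            unfolding K_def P_def by blast
          then show ?thesis by simp
        qed
        have "(1 - 1/u) *\<^sub>R c0 + (1/u) *\<^sub>R p = b"
          unfolding u(3) vec_eq_iff
          by (simp only: vector_add_component vector_scaleR_component real_scaleR_def rid2[OF u0] simp_thms)
        then show ?thesis using aff[OF c0(2) pA, of "1/u"] by simp
      qed
    qed
  qed
  have "a \<in> A" using main[OF a_C a'_C] x_A x_eq by simp
  moreover have "a' \<in> A" using main[OF a'_C a_C] x_A x_eq by (simp add: add.commute)
  ultimately show ?thesis by simp
qed

end
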